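(* Let $\mathcal{M}=(W,\leq,R,V)$ be an extended conditional intuitionistic model and define $\mathcal{M}^{n4}=(W,\leq,R^{n4},V^+,V^-)$ by $R^{n4}:=\{(w,(X,Y),v)\mid\exists u\,((w,X,u)\in R\ \&\ (u,Y,v)\in R)\}$, $V^+(p_i):=V(p_i)$, $V^-(p_i):=V(q_i)$. Then (1) $\mathcal{M}^{n4}$ is a Nelsonian conditional model, and (2) for every $w\in W$ and every $\phi\in\mathcal{L}_{\Box\!\!\rightarrow}$, $\mathcal{M}^{n4},w\models^+\phi$ iff $\mathcal{M},w\models^iE^\pm(\phi)$.
   Context: $\mathcal{L}_{\Box\!\!\rightarrow}$ is built from variables $p_0,p_1,\dots$ with $\wedge,\vee,\to$, strong negation $\sim$, and a binary would-conditional $\Box\!\!\rightarrow$. A Nelsonian conditional model is $(W,\leq,R,V^+,V^-)$ with $W\neq\emptyset$, $\leq$ a preorder, $V^\pm$ assigning upward-closed sets to variables, $R\subseteq W\times(\mathcal{P}(W)\times\mathcal{P}(W))\times W$ satisfying for all $X,Y$: (c1) $w\leq w'$ and $R_{(X,Y)}(w,v)$ imply $R_{(X,Y)}(w',v')$ for some $v'\geq v$; (c2) $R_{(X,Y)}(w,v)$ and $v\leq v'$ imply $R_{(X,Y)}(w',v')$ for some $w'\geq w$. Verification $\models^+$/falsification $\models^-$: atoms by $V^\pm$; $\wedge$ verified iff both verified, falsified iff one falsified; $\vee$ dually; $\sim$ swaps; $w\models^+\psi\to\chi$ iff for all $v\geq w$, $v\models^+\psi$ implies $v\models^+\chi$;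 $w\models^-\psi\to\chi$ iff $w\models^+\psi$ and $w\models^-\chi$; $w\models^+\psi\Box\!\!\rightarrow\chi$ iff for all $v\geq w$ and $u$ with $R_{\|\psi\|}(v,u)$, $u\models^+\chi$; $w\models^-\psi\Box\!\!\rightarrow\chi$ iff some $u$ has $R_{\|\psi\|}(w,u)$ and $u\models^-\chi$; $\|\psi\|=(\{w\mid w\models^+\psi\},\{w\mid w\models^-\psi\})$. The target language $\mathcal{L}^{e+}_{(\Box\!\!\rightarrow,\Diamond\!\!\rightarrow)}$ has variables $p_i$ and extra variables $q_i$, connectives $\wedge,\vee,\to$ and primitive binary $\Box\!\!\rightarrow$, $\Diamond\!\!\rightarrow$ (no negation). An extended conditional intuitionistic model is $(W,\leq,R,V)$ with $\leq$ a preorder, $V$ assigning upward-closed sets to all $p_i,q_i$, $R\subseteq W\times\mathcal{P}(W)\times W$ such that for all $X$: if $w\leq w'$ and $R_X(w,v)$ then $R_X(w',v')$ for some $v'\geq v$; if $R_X(w,v)$ and $v\leq v'$ then $R_X(w',v')$ for some $w'\geq w$. $\models^i$: atoms by $V$; $\wedge,\vee$ pointwise; $w\models^i\psi\to\chi$ iff for all $v\geq w$, $v\models^i\psi$ implies $v\models^i\chi$; $w\models^i\psi\Box\!\!\rightarrow\chi$ iff for all $v\geq w$ and $u$ with $R_{\|\psi\|^i}(v,u)$, $u\models^i\chi$; $w\models^i\psi\Diamond\!\!\rightarrow\chi$ iff some $u$ has $R_{\|\psi\|^i}(w,u)$ and $u\models^i\chi$; $\|\psi\|^i=\{w\mid w\models^i\psi\}$.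 The translation $E^\pm$: $E^\pm(p_i)=p_i$, $E^\pm(\sim p_i)=q_i$, $E^\pm(\phi\wedge\psi)=E^\pm(\phi)\wedge E^\pm(\psi)$, $E^\pm(\sim(\phi\wedge\psi))=E^\pm(\sim\phi)\vee E^\pm(\sim\psi)$, $E^\pm(\phi\vee\psi)=E^\pm(\phi)\vee E^\pm(\psi)$, $E^\pm(\sim(\phi\vee\psi))=E^\pm(\sim\phi)\wedge E^\pm(\sim\psi)$, $E^\pm(\sim\sim\phi)=E^\pm(\phi)$, $E^\pm(\phi\to\psi)=E^\pm(\phi)\to E^\pm(\psi)$, $E^\pm(\sim(\phi\to\psi))=E^\pm(\phi)\wedge E^\pm(\sim\psi)$, $E^\pm(\phi\Box\!\!\rightarrow\psi)=E^\pm(\phi)\Box\!\!\rightarrow(E^\pm(\sim\phi)\Box\!\!\rightarrow E^\pm(\psi))$, $E^\pm(\sim(\phi\Box\!\!\rightarrow\psi))=E^\pm(\phi)\Diamond\!\!\rightarrow(E^\pm(\sim\phi)\Diamond\!\!\rightarrow E^\pm(\sim\psi))$. *)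

theory Defs
  imports Main
begin

datatype fm =
    Var nat
  | Neg fm             (* strong negation ~ *)
  | Conj fm fm
  | Disj fm fm
  | Imp fm fm
  | Cond fm fm

datatype efm =
    PV nat
  | QV nat
  | EConj efm efm
  | EDisj efm efm
  | EImp efm efm
  | EBox efm efm
  | EDia efm efm

text \<open>A model is (W, le, R, Vp, Vq): Vp i = V(p_i), Vq i = V(q_i);
  R X w v means (w, X, v) \<in> R, i.e. R_X(w,v).\<close>

definition preorder_on :: "'w set \<Rightarrow> ('w \<Rightarrow> 'w \<Rightarrow> bool) \<Rightarrow> bool" where
  "preorder_on W le \<longleftrightarrow>
     (\<forall>w v. le w v \<longrightarrow> w \<in> W \<and> v \<in> W) \<and>
     (\<forall>w\<in>W. le w w) \<and>
     (\<forall>u v w. le u v \<longrightarrow> le v w \<longrightarrow> le u w)"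

definition up_closed :: "'w set \<Rightarrow> ('w \<Rightarrow> 'w \<Rightarrow> bool) \<Rightarrow> 'w set \<Rightarrow> bool" where
  "up_closed W le A \<longleftrightarrow> A \<subseteq> W \<and> (\<forall>w v. w \<in> A \<longrightarrow> le w v \<longrightarrow> v \<in> A)"

definition ext_cim ::
  "'w set \<Rightarrow> ('w \<Rightarrow> 'w \<Rightarrow> bool) \<Rightarrow> ('w set \<Rightarrow> 'w \<Rightarrow> 'w \<Rightarrow> bool)
   \<Rightarrow> (nat \<Rightarrow> 'w set) \<Rightarrow> (nat \<Rightarrow> 'w set) \<Rightarrow> bool" where
  "ext_cim W le R Vp Vq \<longleftrightarrow>
     W \<noteq> {} \<and> preorder_on W le \<and>
     (\<forall>i. up_closed W le (Vp i)) \<and> (\<forall>i. up_closed W le (Vq i)) \<and>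
     (\<forall>X w v. R X w v \<longrightarrow> w \<in> W \<and> X \<subseteq> W \<and> v \<in> W) \<and>
     (\<forall>X. X \<subseteq> W \<longrightarrow>
        (\<forall>w w' v. le w w' \<longrightarrow> R X w v \<longrightarrow> (\<exists>v'. le v v' \<and> R X w' v')) \<and>
        (\<forall>w v v'. R X w v \<longrightarrow> le v v' \<longrightarrow> (\<exists>w'. le w w' \<and> R X w' v')))"

fun isat ::
  "'w set \<Rightarrow> ('w \<Rightarrow> 'w \<Rightarrow> bool) \<Rightarrow> ('w set \<Rightarrow> 'w \<Rightarrow> 'w \<Rightarrow> bool)
   \<Rightarrow> (nat \<Rightarrow> 'w set) \<Rightarrow> (nat \<Rightarrow> 'w set) \<Rightarrow> 'w \<Rightarrow> efm \<Rightarrow> bool" where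
  "isat W le R Vp Vq w (PV i) = (w \<in> Vp i)"
| "isat W le R Vp Vq w (QV i) = (w \<in> Vq i)"
| "isat W le R Vp Vq w (EConj a b) = (isat W le R Vp Vq w a \<and> isat W le R Vp Vq w b)"
| "isat W le R Vp Vq w (EDisj a b) = (isat W le R Vp Vq w a \<or> isat W le R Vp Vq w b)"
| "isat W le R Vp Vq w (EImp a b) =
     (\<forall>v. le w v \<longrightarrow> isat W le R Vp Vq v a \<longrightarrow> isat W le R Vp Vq v b)"
| "isat W le R Vp Vq w (EBox a b) =
     (\<forall>v u. le w v \<longrightarrow> R {x \<in> W. isat W le R Vp Vq x a} v u \<longrightarrow> isat W le R Vp Vq u b)"
| "isat W le R Vp Vq w (EDia a b) =
     (\<exists>u. R {x \<in> W. isat W le R Vp Vq x a} w u \<and> isat W le R Vp Vq u b)"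

text \<open>A model is (W, le, Rn, Vplus, Vminus); Rn (X,Y) w v means R_{(X,Y)}(w,v).\<close>

definition nelson_model ::
  "'w set \<Rightarrow> ('w \<Rightarrow> 'w \<Rightarrow> bool) \<Rightarrow> ('w set \<times> 'w set \<Rightarrow> 'w \<Rightarrow> 'w \<Rightarrow> bool)
   \<Rightarrow> (nat \<Rightarrow> 'w set) \<Rightarrow> (nat \<Rightarrow> 'w set) \<Rightarrow> bool" where
  "nelson_model W le R Vplus Vminus \<longleftrightarrow>
     W \<noteq> {} \<and> preorder_on W le \<and>
     (\<forall>i. up_closed W le (Vplus i)) \<and> (\<forall>i. up_closed W le (Vminus i)) \<and>
     (\<forall>X Y w v. R (X, Y) w v \<longrightarrow> w \<in> W \<and> X \<subseteq> W \<and> Y \<subseteq> W \<and> v \<in> W) \<and>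
     (\<forall>X Y. X \<subseteq> W \<longrightarrow> Y \<subseteq> W \<longrightarrow>
        (\<forall>w w' v. le w w' \<longrightarrow> R (X, Y) w v \<longrightarrow> (\<exists>v'. le v v' \<and> R (X, Y) w' v')) \<and>
        (\<forall>w v v'. R (X, Y) w v \<longrightarrow> le v v' \<longrightarrow> (\<exists>w'. le w w' \<and> R (X, Y) w' v')))"

text \<open>nsat True = verification (|=+), nsat False = falsification (|=-).\<close>

fun nsat ::
  "'w set \<Rightarrow> ('w \<Rightarrow> 'w \<Rightarrow> bool) \<Rightarrow> ('w set \<times> 'w set \<Rightarrow> 'w \<Rightarrow> 'w \<Rightarrow> bool)
   \<Rightarrow> (nat \<Rightarrow> 'w set) \<Rightarrow> (nat \<Rightarrow> 'w set) \<Rightarrow> bool \<Rightarrow> 'w \<Rightarrow> fm \<Rightarrow> bool" where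
  "nsat W le R Vplus Vminus b w (Var i) = (if b then w \<in> Vplus i else w \<in> Vminus i)"
| "nsat W le R Vplus Vminus b w (Neg a) = nsat W le R Vplus Vminus (\<not> b) w a"
| "nsat W le R Vplus Vminus b w (Conj a c) =
     (if b then nsat W le R Vplus Vminus True w a \<and> nsat W le R Vplus Vminus True w c
      else nsat W le R Vplus Vminus False w a \<or> nsat W le R Vplus Vminus False w c)"
| "nsat W le R Vplus Vminus b w (Disj a c) =
     (if b then nsat W le R Vplus Vminus True w a \<or> nsat W le R Vplus Vminus True w c
      else nsat W le R Vplus Vminus False w a \<and> nsat W le R Vplus Vminus False w c)"
| "nsat W le R Vplus Vminus b w (Imp a c) =
     (if b then (\<forall>v. le w v \<longrightarrow> nsat W le R Vplus Vminus True v a \<longrightarrow> nsat W le R Vplus Vminus True v c)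
      else nsat W le R Vplus Vminus True w a \<and> nsat W le R Vplus Vminus False w c)"
| "nsat W le R Vplus Vminus b w (Cond a c) =
     (if b then (\<forall>v u. le w v \<longrightarrow>
                   R ({x \<in> W. nsat W le R Vplus Vminus True x a},
                      {x \<in> W. nsat W le R Vplus Vminus False x a}) v u \<longrightarrow>
                   nsat W le R Vplus Vminus True u c)
      else (\<exists>u. R ({x \<in> W. nsat W le R Vplus Vminus True x a},
                    {x \<in> W. nsat W le R Vplus Vminus False x a}) w u \<and>
                nsat W le R Vplus Vminus False u c))"

text \<open>trans True phi = E^\<plusminus>(phi), trans False phi = E^\<plusminus>(~phi).\<close>

fun trans :: "bool \<Rightarrow> fm \<Rightarrow> efm" where
  "trans b (Var i) = (if b then PV i else QV i)"
| "trans b (Neg a) = trans (\<not> b) a"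
| "trans b (Conj a c) =
     (if b then EConj (trans True a) (trans True c) else EDisj (trans False a) (trans False c))"
| "trans b (Disj a c) =
     (if b then EDisj (trans True a) (trans True c) else EConj (trans False a) (trans False c))"
| "trans b (Imp a c) =
     (if b then EImp (trans True a) (trans True c) else EConj (trans True a) (trans False c))"
| "trans b (Cond a c) =
     (if b then EBox (trans True a) (EBox (trans False a) (trans True c))
      else EDia (trans True a) (EDia (trans False a) (trans False c)))"

definition Epm :: "fm \<Rightarrow> efm" where
  "Epm \<phi> = trans True \<phi>"

definition Rn4 :: "('w set \<Rightarrow> 'w \<Rightarrow> 'w \<Rightarrow> bool) \<Rightarrow> 'w set \<times> 'w set \<Rightarrow> 'w \<Rightarrow> 'w \<Rightarrow> bool" where
  "Rn4 R XY w v \<longleftrightarrow> (\<exists>u. R (fst XY) w u \<and> R (snd XY) u v)"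

end

theory Submission
  imports Defs
begin

lemma cim_leW: "ext_cim W le R Vp Vq \<Longrightarrow> le w v \<Longrightarrow> v \<in> W"
  unfolding ext_cim_def preorder_on_def by (elim conjE) (drule spec, drule spec, drule mp, assumption, simp)
lemma cim_refl: "ext_cim W le R Vp Vq \<Longrightarrow> w \<in> W \<Longrightarrow> le w w"
  unfolding ext_cim_def preorder_on_def by auto
lemma cim_trans: "ext_cim W le R Vp Vq \<Longrightarrow> le u v \<Longrightarrow> le v w \<Longrightarrow> le u w"
  unfolding ext_cim_def preorder_on_def by (elim conjE) metis
lemma cim_RW: "ext_cim W le R Vp Vq \<Longrightarrow> R X w v \<Longrightarrow> w \<in> W \<and> X \<subseteq> W \<and> v \<in> W"
  unfolding ext_cim_def by (elim conjE) metis
lemma cim_c1: "ext_cim W le R Vp Vq \<Longrightarrow> le w w' \<Longrightarrow> R X w v \<Longrightarrow> \<exists>v'. le v v' \<and> R X w' v'"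
proof -
  assume M: "ext_cim W le R Vp Vq" and h: "le w w'" "R X w v"
  then have "X \<subseteq> W" using cim_RW by metis
  with M h show ?thesis unfolding ext_cim_def by (elim conjE) metis
qed
lemma cim_c2: "ext_cim W le R Vp Vq \<Longrightarrow> R X w v \<Longrightarrow> le v v' \<Longrightarrow> \<exists>w'. le w w' \<and> R X w' v'"
proof -
  assume M: "ext_cim W le R Vp Vq" and h: "R X w v" "le v v'"
  then have "X \<subseteq> W" using cim_RW by metis
  with M h show ?thesis unfolding ext_cim_def by (elim conjE) metis
qed

lemma main_equiv:
  assumes M: "ext_cim W le R Vp Vq"
  shows "\<forall>b. \<forall>w \<in> W. nsat W le (Rn4 R) Vp Vq b w \<phi> \<longleftrightarrow> isat W le R Vp Vq w (trans b \<phi>)"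
proof (induction \<phi>)
  case (Var x)
  then show ?case by simp
next
  case (Neg \<phi>)
  then show ?case by simp
next
  case (Conj \<phi>1 \<phi>2)
  then show ?case by simp
next
  case (Disj \<phi>1 \<phi>2)
  then show ?case by simp
next
  case (Imp \<phi>1 \<phi>2)
  show ?case
  proof (intro allI ballI)
    fix b w assume w: "w \<in> W"
    have E: "\<And>v bb. le w v \<Longrightarrow> nsat W le (Rn4 R) Vp Vq bb v \<phi>1 = isat W le R Vp Vq v (trans bb \<phi>1)
         \<and> nsat W le (Rn4 R) Vp Vq bb v \<phi>2 = isat W le R Vp Vq v (trans bb \<phi>2)"
      using Imp.IH cim_leW[OF M] by blast
    show "nsat W le (Rn4 R) Vp Vq b w (Imp \<phi>1 \<phi>2) = isat W le R Vp Vq w (trans b (Imp \<phi>1 \<phi>2))"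
      using Imp.IH w E by (cases b) auto
  qed
next
  case (Cond a c)
  note RW = cim_RW[OF M] and c2 = cim_c2[OF M] and tr = cim_trans[OF M] and refl = cim_refl[OF M]
  define A where "A = {x \<in> W. nsat W le (Rn4 R) Vp Vq True x a}"
  define B where "B = {x \<in> W. nsat W le (Rn4 R) Vp Vq False x a}"
  have A: "{x \<in> W. isat W le R Vp Vq x (trans True a)} = A" using Cond.IH(1) unfolding A_def by auto
  have B: "{x \<in> W. isat W le R Vp Vq x (trans False a)} = B" using Cond.IH(1) unfolding B_def by auto
  have C: "\<And>u bb. R B v u \<Longrightarrow> nsat W le (Rn4 R) Vp Vq bb u c = isat W le R Vp Vq u (trans bb c)" for v
    using Cond.IH(2) RW by blast
  have RnB: "\<And>v u. Rn4 R (A, B) v u \<Longrightarrow> \<exists>m. R B m u" unfolding Rn4_def by auto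
  show ?case
  proof (intro allI ballI)
    fix b w assume w: "w \<in> W"
    show "nsat W le (Rn4 R) Vp Vq b w (Cond a c) = isat W le R Vp Vq w (trans b (Cond a c))"
    proof (cases b)
      case True
      have L: "nsat W le (Rn4 R) Vp Vq b w (Cond a c) =
        (\<forall>v u. le w v \<longrightarrow> Rn4 R (A, B) v u \<longrightarrow> isat W le R Vp Vq u (trans True c))"
      proof -
        have L0: "nsat W le (Rn4 R) Vp Vq b w (Cond a c) =
          (\<forall>v u. le w v \<longrightarrow> Rn4 R (A, B) v u \<longrightarrow> nsat W le (Rn4 R) Vp Vq True u c)"
          using True by (simp add: A_def B_def)
        show ?thesis unfolding L0 using C RnB by meson
      qed
      have Rr: "isat W le R Vp Vq w (trans b (Cond a c)) =
        (\<forall>v u. le w v \<longrightarrow> R A v u \<longrightarrow> (\<forall>v' u'. le u v' \<longrightarrow> R B v' u' \<longrightarrow> isat W le R Vp Vq u' (trans True c)))"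
        using True by (simp add: A B)
      show ?thesis unfolding L Rr
      proof (intro iffI allI impI)
        fix v u v' u'
        assume H: "\<forall>v u. le w v \<longrightarrow> Rn4 R (A, B) v u \<longrightarrow> isat W le R Vp Vq u (trans True c)"
          and h: "le w v" "R A v u" "le u v'" "R B v' u'"
        obtain w' where w': "le v w'" "R A w' v'" using c2 h by blast
        have "le w w'" using tr h(1) w'(1) .
        moreover have "Rn4 R (A, B) w' u'" unfolding Rn4_def using w' h by auto
        ultimately show "isat W le R Vp Vq u' (trans True c)" using H by blast
      next
        fix v u
        assume H: "\<forall>v u. le w v \<longrightarrow> R A v u \<longrightarrow> (\<forall>v' u'. le u v' \<longrightarrow> R B v' u' \<longrightarrow> isat W le R Vp Vq u' (trans True c))"
          and h: "le w v" "Rn4 R (A, B) v u"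
        then obtain m where m: "R A v m" "R B m u" unfolding Rn4_def by auto
        have "le m m" using refl RW m(1) by blast
        then show "isat W le R Vp Vq u (trans True c)" using H h m by blast
      qed
    next
      case False
      have L: "nsat W le (Rn4 R) Vp Vq b w (Cond a c) =
        (\<exists>u. Rn4 R (A, B) w u \<and> isat W le R Vp Vq u (trans False c))"
      proof -
        have L0: "nsat W le (Rn4 R) Vp Vq b w (Cond a c) =
          (\<exists>u. Rn4 R (A, B) w u \<and> nsat W le (Rn4 R) Vp Vq False u c)"
          using False by (simp add: A_def B_def)
        show ?thesis unfolding L0 using C RnB by meson
      qed
      show ?thesis unfolding L using False by (auto simp add: A B Rn4_def)
    qed
  qed
qed

theorem lemma14:
  assumes "ext_cim W le R Vp Vq"
  shows "nelson_model W le (Rn4 R) Vp Vq \<and>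
         (\<forall>w \<in> W. \<forall>\<phi>. nsat W le (Rn4 R) Vp Vq True w \<phi> \<longleftrightarrow> isat W le R Vp Vq w (Epm \<phi>))"
proof
  note RW = cim_RW[OF assms] and c1 = cim_c1[OF assms] and c2 = cim_c2[OF assms]
  have P1: "\<forall>w w' v. le w w' \<longrightarrow> Rn4 R (X, Y) w v \<longrightarrow> (\<exists>v'. le v v' \<and> Rn4 R (X, Y) w' v')" for X Y
  proof (intro allI impI)
    fix w w' v assume "le w w'" "Rn4 R (X, Y) w v"
    then obtain u where u: "R X w u" "R Y u v" unfolding Rn4_def by auto
    obtain u' where "le u u'" "R X w' u'" using c1 u `le w w'` by blast
    moreover obtain v' where "le v v'" "R Y u' v'" using c1 u `le u u'` by blast
    ultimately show "\<exists>v'. le v v' \<and> Rn4 R (X, Y) w' v'" unfolding Rn4_def by auto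
  qed
  have P2: "\<forall>w v v'. Rn4 R (X, Y) w v \<longrightarrow> le v v' \<longrightarrow> (\<exists>w'. le w w' \<and> Rn4 R (X, Y) w' v')" for X Y
  proof (intro allI impI)
    fix w v v' assume "Rn4 R (X, Y) w v" "le v v'"
    then obtain u where u: "R X w u" "R Y u v" unfolding Rn4_def by auto
    obtain u' where "le u u'" "R Y u' v'" using c2 u `le v v'` by blast
    moreover obtain w' where "le w w'" "R X w' u'" using c2 u `le u u'` by blast
    ultimately show "\<exists>w'. le w w' \<and> Rn4 R (X, Y) w' v'" unfolding Rn4_def by auto
  qed
  have P3: "\<forall>X Y w v. Rn4 R (X, Y) w v \<longrightarrow> w \<in> W \<and> X \<subseteq> W \<and> Y \<subseteq> W \<and> v \<in> W"
    using RW unfolding Rn4_def by auto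
  have base: "W \<noteq> {} \<and> preorder_on W le \<and> (\<forall>i. up_closed W le (Vp i)) \<and> (\<forall>i. up_closed W le (Vq i))"
    using assms unfolding ext_cim_def by (elim conjE) simp
  show "nelson_model W le (Rn4 R) Vp Vq"
    unfolding nelson_model_def using base P1 P2 P3 by simp
next
  show "\<forall>w \<in> W. \<forall>\<phi>. nsat W le (Rn4 R) Vp Vq True w \<phi> \<longleftrightarrow> isat W le R Vp Vq w (Epm \<phi>)"
    using main_equiv[OF assms] unfolding Epm_def by blast
qed

end
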